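(* Let $\mathcal{K}$ be a continuous unitary representation of $\overline{\mathfrak{S}}_\infty$ in a Hilbert space $\mathcal{H}$, let $n\geq 0$ be an integer, and let $P_n$ be the weak-operator limit of $\mathcal{K}({}^n\sigma_m)$ as $m\to\infty$. Then $P_n$ is a projection, i.e. $P_n^2=P_n$.
   Context: $\overline{\mathfrak{S}}_\infty$ is the group of all bijections of $\mathbb{N}$, with the Polish topology in which the subgroups $\mathfrak{S}(n,\infty)=\{s: s(k)=k \text{ for } k=1,\dots,n\}$ form a fundamental system of neighborhoods of the identity; continuity of $\mathcal{K}$ means $\lim_{k\to\infty}\sup_{s\in\mathfrak{S}(k,\infty)}\|\mathcal{K}(s)\eta-\eta\|=0$ for each $\eta\in\mathcal{H}$. $(k\;j)$ denotes the transposition of $k$ and $j$, and ${}^n\sigma_m=(n+1\;\;n+m+1)(n+2\;\;n+m+2)\cdots(n+m\;\;n+2m)$. The weak-operator limit $P_n=\lim_{m\to\infty}\mathcal{K}({}^n\sigma_m)$ exists and is a self-adjoint operator. *)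

theory Defs
  imports "HOL-Analysis.Analysis" "HOL-Combinatorics.Combinatorics"
begin

text \<open>A complex Hilbert space is modelled as a real Hilbert space (type class
  real_inner + complete_space) together with a complex structure J
  (multiplication by i): J real-linear, J (J x) = - x, J isometric for the real
  inner product.  The complex inner product (linear in the first argument) is then
  recovered as follows.\<close>

definition complex_structure :: "('h::real_inner \<Rightarrow> 'h) \<Rightarrow> bool" where
  "complex_structure J \<longleftrightarrow> linear J \<and> (\<forall>x. J (J x) = - x) \<and> (\<forall>x y. inner (J x) (J y) = inner x y)"

definition cinner :: "('h::real_inner \<Rightarrow> 'h) \<Rightarrow> 'h \<Rightarrow> 'h \<Rightarrow> complex" where
  "cinner J x y = Complex (inner x y) (- inner (J x) y)"

text \<open>The group of all bijections of N = {1,2,...}; a bijection is represented by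
  a permutation of nat fixing 0.\<close>

definition Sinf :: "(nat \<Rightarrow> nat) set" where
  "Sinf = {s. s permutes {1..}}"

definition Sfix :: "nat \<Rightarrow> (nat \<Rightarrow> nat) set" where
  "Sfix n = {s \<in> Sinf. \<forall>k\<in>{1..n}. s k = k}"

text \<open>Unitary representation of Sinf on the complex Hilbert space (with
  complex structure J): a group homomorphism into complex-linear
  (i.e. real-linear and commuting with J) surjective isometries.\<close>

definition unitary_rep :: "('h::real_inner \<Rightarrow> 'h) \<Rightarrow> ((nat \<Rightarrow> nat) \<Rightarrow> 'h \<Rightarrow> 'h) \<Rightarrow> bool" where
  "unitary_rep J K \<longleftrightarrow>
     K id = id \<and>
     (\<forall>s\<in>Sinf. \<forall>t\<in>Sinf. K (s \<circ> t) = K s \<circ> K t) \<and>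
     (\<forall>s\<in>Sinf. linear (K s) \<and> (\<forall>x. K s (J x) = J (K s x)) \<and> surj (K s) \<and>
                 (\<forall>x y. cinner J (K s x) (K s y) = cinner J x y))"

definition continuous_rep :: "((nat \<Rightarrow> nat) \<Rightarrow> 'h::real_normed_vector \<Rightarrow> 'h) \<Rightarrow> bool" where
  "continuous_rep K \<longleftrightarrow>
     (\<forall>\<eta>. (\<lambda>k. SUP s\<in>Sfix k. norm (K s \<eta> - \<eta>)) \<longlonglongrightarrow> 0)"

text \<open>nsigma n m = (n+1  n+m+1)(n+2  n+m+2)...(n+m  n+2m).\<close>

definition nsigma :: "nat \<Rightarrow> nat \<Rightarrow> nat \<Rightarrow> nat" where
  "nsigma n m = foldr (\<circ>) (map (\<lambda>i. Transposition.transpose (n + i) (n + m + i)) [1..<m+1]) id"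

end

theory Submission
  imports Defs
begin

definition nsf :: "nat \<Rightarrow> nat \<Rightarrow> nat \<Rightarrow> nat" where
  "nsf n m j = (if n < j \<and> j \<le> n + m then j + m else if n + m < j \<and> j \<le> n + 2*m then j - m else j)"

lemma foldr_snoc_id: "foldr (\<circ>) (xs @ [t]) id = foldr (\<circ>) xs id \<circ> (t::'a\<Rightarrow>'a)"
  by (induction xs) auto

definition FF :: "nat \<Rightarrow> nat \<Rightarrow> nat \<Rightarrow> nat \<Rightarrow> nat" where
  "FF n m k = foldr (\<circ>) (map (\<lambda>i. Transposition.transpose (n + i) (n + m + i)) [1..<k+1]) id"

lemma FF_0: "FF n m 0 = id"
  by (simp add: FF_def)

lemma FF_Suc: "FF n m (Suc k) = FF n m k \<circ> Transposition.transpose (n + Suc k) (n + m + Suc k)"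
proof -
  have "[1..<Suc k + 1] = [1..<k+1] @ [Suc k]" by simp
  then show ?thesis unfolding FF_def by (simp only: foldr_snoc_id map_append list.map)
qed

lemma foldr_gen:
  "k \<le> m \<Longrightarrow> FF n m k j
   = (if n < j \<and> j \<le> n + k then j + m else if n + m < j \<and> j \<le> n + m + k then j - m else j)"
proof (induction k arbitrary: j)
  case 0
  then show ?case by (simp add: FF_0)
next
  case (Suc k)
  then show ?case by (simp add: FF_Suc Transposition.transpose_def) arith
qed

lemma FF_perm: "FF n m k permutes {1..}"
proof (induction k)
  case 0 show ?case by (simp only: FF_0) (rule permutes_id)
next
  case (Suc k) show ?case unfolding FF_Suc by (rule permutes_compose[OF permutes_swap_id Suc.IH]) auto
qed

lemma nsigma_eq: "nsigma n m j = nsf n m j"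
  using foldr_gen[of m m n j] unfolding nsigma_def nsf_def FF_def by (simp add: mult_2)

lemma nsigma_Sinf: "nsigma n m \<in> Sinf"
  using FF_perm[of n m m] unfolding Sinf_def nsigma_def FF_def by simp

lemma nsigma_invol: "nsigma n m \<circ> nsigma n m = id"
  by (rule ext) (auto simp: nsigma_eq nsf_def)

lemma nsigma_tau:
  assumes "2*m \<le> l"
  shows "nsigma n m \<circ> nsigma n l = nsigma n l \<circ> (nsigma n l \<circ> nsigma n m \<circ> nsigma n l)"
    and "nsigma n l \<circ> nsigma n m \<circ> nsigma n l \<in> Sfix (n + l)"
proof -
  show "nsigma n m \<circ> nsigma n l = nsigma n l \<circ> (nsigma n l \<circ> nsigma n m \<circ> nsigma n l)"
  proof -
    have "nsigma n l \<circ> (nsigma n l \<circ> nsigma n m \<circ> nsigma n l) = (nsigma n l \<circ> nsigma n l) \<circ> nsigma n m \<circ> nsigma n l"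
      by (simp add: o_assoc)
    then show ?thesis using nsigma_invol[of n l] by simp
  qed
  have "nsigma n l \<circ> nsigma n m \<circ> nsigma n l \<in> Sinf"
    using nsigma_Sinf unfolding Sinf_def by (blast intro: permutes_compose)
  moreover have "\<forall>k\<in>{1..n+l}. (nsigma n l \<circ> nsigma n m \<circ> nsigma n l) k = k"
    using assms by (auto simp: nsigma_eq nsf_def)
  ultimately show "nsigma n l \<circ> nsigma n m \<circ> nsigma n l \<in> Sfix (n + l)"
    unfolding Sfix_def by blast
qed

lemma main:
  fixes J :: "'h::{real_inner, complete_space} \<Rightarrow> 'h"
    and K :: "(nat \<Rightarrow> nat) \<Rightarrow> 'h \<Rightarrow> 'h"
    and P :: "'h \<Rightarrow> 'h"
    and n :: nat
  assumes "complex_structure J"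
    and U: "unitary_rep J K"
    and C: "continuous_rep K"
    and L: "\<forall>x y. (\<lambda>m. cinner J (K (nsigma n m) x) y) \<longlonglongrightarrow> cinner J (P x) y"
  shows "P \<circ> P = P"
proof -
  define \<sigma> where "\<sigma> = nsigma n"
  have Kid: "K id = id" using U unfolding unitary_rep_def by blast
  have Kcomp: "\<And>s t. s \<in> Sinf \<Longrightarrow> t \<in> Sinf \<Longrightarrow> K (s \<circ> t) = K s \<circ> K t"
    using U unfolding unitary_rep_def by blast
  have Klin: "\<And>s. s \<in> Sinf \<Longrightarrow> linear (K s)"
    using U unfolding unitary_rep_def by blast
  have Kinner: "\<And>s x y. s \<in> Sinf \<Longrightarrow> inner (K s x) (K s y) = inner x y"
  proof -
    fix s x y assume "s \<in> Sinf"
    then have "cinner J (K s x) (K s y) = cinner J x y" using U unfolding unitary_rep_def by blast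
    then show "inner (K s x) (K s y) = inner x y" unfolding cinner_def by simp
  qed
  have Knorm: "\<And>s x. s \<in> Sinf \<Longrightarrow> norm (K s x) = norm x"
    using Kinner by (simp add: norm_eq_sqrt_inner)
  have Lr: "\<And>(x::'h) (y::'h). (\<lambda>m. inner (K (\<sigma> m) x) y) \<longlonglongrightarrow> inner (P x) y"
  proof -
    fix x y :: 'h
    have "(\<lambda>m. Re (cinner J (K (\<sigma> m) x) y)) \<longlonglongrightarrow> Re (cinner J (P x) y)"
      unfolding \<sigma>_def by (intro tendsto_Re) (rule L[rule_format])
    then show "(\<lambda>m. inner (K (\<sigma> m) x) y) \<longlonglongrightarrow> inner (P x) y" unfolding cinner_def by simp
  qed
  have sS: "\<And>m. \<sigma> m \<in> Sinf" unfolding \<sigma>_def by (rule nsigma_Sinf)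
  have KK: "\<And>m v. K (\<sigma> m) (K (\<sigma> m) v) = v"
  proof -
    fix m v
    have "K (\<sigma> m \<circ> \<sigma> m) = K (\<sigma> m) \<circ> K (\<sigma> m)" by (rule Kcomp[OF sS sS])
    moreover have "\<sigma> m \<circ> \<sigma> m = id" unfolding \<sigma>_def by (rule nsigma_invol)
    ultimately have "K (\<sigma> m) \<circ> K (\<sigma> m) = id" using Kid by simp
    then have "(K (\<sigma> m) \<circ> K (\<sigma> m)) v = id v" by simp
    then show "K (\<sigma> m) (K (\<sigma> m) v) = v" by simp
  qed
  have Sfix_Sinf: "\<And>k. Sfix k \<subseteq> Sinf" unfolding Sfix_def by blast
  have key: "\<And>(x::'h) (y::'h) m. (\<lambda>l. inner (K (\<sigma> m) (K (\<sigma> l) x)) y) \<longlonglongrightarrow> inner (P x) y"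
  proof -
    fix x y :: 'h and m :: nat
    define g where "g l = (SUP s\<in>Sfix (n + l). norm (K s x - x)) * norm y" for l
    have g0: "g \<longlonglongrightarrow> 0"
    proof -
      have "(\<lambda>k. SUP s\<in>Sfix k. norm (K s x - x)) \<longlonglongrightarrow> 0" by (rule C[unfolded continuous_rep_def, rule_format])
      then have "(\<lambda>l. SUP s\<in>Sfix (l + n). norm (K s x - x)) \<longlonglongrightarrow> 0"
        by (rule LIMSEQ_ignore_initial_segment[where k=n, simplified])
      then have "(\<lambda>l. (SUP s\<in>Sfix (n + l). norm (K s x - x)) * norm y) \<longlonglongrightarrow> 0 * norm y"
        by (intro tendsto_mult tendsto_const) (simp add: add.commute)
      then show ?thesis unfolding g_def by simp
    qed
    have ev: "\<forall>\<^sub>F l in sequentially. norm (inner (K (\<sigma> m) (K (\<sigma> l) x)) y - inner (K (\<sigma> l) x) y) \<le> g l"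
    proof (rule eventually_sequentiallyI[where c="2*m"])
      fix l assume "2*m \<le> l"
      define \<tau> where "\<tau> = \<sigma> l \<circ> \<sigma> m \<circ> \<sigma> l"
      have t1: "\<sigma> m \<circ> \<sigma> l = \<sigma> l \<circ> \<tau>" and t2: "\<tau> \<in> Sfix (n + l)"
        using nsigma_tau[OF \<open>2*m \<le> l\<close>, of n] unfolding \<tau>_def \<sigma>_def by auto
      have tS: "\<tau> \<in> Sinf" using t2 Sfix_Sinf by blast
      have "K (\<sigma> m) (K (\<sigma> l) x) = K (\<sigma> m \<circ> \<sigma> l) x" using Kcomp sS by simp
      also have "\<dots> = K (\<sigma> l) (K \<tau> x)" using t1 Kcomp sS tS by simp
      finally have e1: "K (\<sigma> m) (K (\<sigma> l) x) = K (\<sigma> l) (K \<tau> x)" .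
      have "inner (K (\<sigma> m) (K (\<sigma> l) x)) y - inner (K (\<sigma> l) x) y = inner (K (\<sigma> l) (K \<tau> x) - K (\<sigma> l) x) y"
        using e1 by (simp add: inner_diff_left)
      also have "\<dots> = inner (K (\<sigma> l) (K \<tau> x - x)) y"
        using Klin[OF sS] by (simp add: linear_diff)
      finally have eq: "inner (K (\<sigma> m) (K (\<sigma> l) x)) y - inner (K (\<sigma> l) x) y = inner (K (\<sigma> l) (K \<tau> x - x)) y" .
      have "norm (inner (K (\<sigma> m) (K (\<sigma> l) x)) y - inner (K (\<sigma> l) x) y) \<le> norm (K (\<sigma> l) (K \<tau> x - x)) * norm y"
        unfolding eq real_norm_def by (rule Cauchy_Schwarz_ineq2)
      also have "\<dots> = norm (K \<tau> x - x) * norm y" using Knorm sS by simp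
      also have "\<dots> \<le> g l" unfolding g_def
      proof (rule mult_right_mono[OF cSUP_upper[OF t2]])
        show "bdd_above ((\<lambda>s. norm (K s x - x)) ` Sfix (n + l))"
        proof (rule bdd_aboveI2)
          fix s assume "s \<in> Sfix (n + l)"
          then have "s \<in> Sinf" using Sfix_Sinf by blast
          then show "norm (K s x - x) \<le> 2 * norm x"
            using norm_triangle_ineq4[of "K s x" x] Knorm by simp
        qed
      qed simp
      finally show "norm (inner (K (\<sigma> m) (K (\<sigma> l) x)) y - inner (K (\<sigma> l) x) y) \<le> g l" .
    qed
    have "(\<lambda>l. inner (K (\<sigma> m) (K (\<sigma> l) x)) y - inner (K (\<sigma> l) x) y) \<longlonglongrightarrow> 0"
      by (rule Lim_null_comparison[OF ev g0])
    then have "(\<lambda>l. (inner (K (\<sigma> m) (K (\<sigma> l) x)) y - inner (K (\<sigma> l) x) y) + inner (K (\<sigma> l) x) y) \<longlonglongrightarrow> 0 + inner (P x) y"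
      by (intro tendsto_add Lr)
    then show "(\<lambda>l. inner (K (\<sigma> m) (K (\<sigma> l) x)) y) \<longlonglongrightarrow> inner (P x) y" by simp
  qed
  have step: "\<And>(x::'h) (y::'h) m. inner (K (\<sigma> m) (P x)) y = inner (P x) y"
  proof -
    fix x y :: 'h and m :: nat
    have "inner (K (\<sigma> m) (P x)) y = inner (K (\<sigma> m) (P x)) (K (\<sigma> m) (K (\<sigma> m) y))" by (simp add: KK)
    also have "\<dots> = inner (P x) (K (\<sigma> m) y)" using Kinner sS by simp
    finally have a: "inner (K (\<sigma> m) (P x)) y = inner (P x) (K (\<sigma> m) y)" .
    have "(\<lambda>l. inner (K (\<sigma> l) x) (K (\<sigma> m) y)) \<longlonglongrightarrow> inner (P x) (K (\<sigma> m) y)" by (rule Lr)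
    moreover have "(\<lambda>l. inner (K (\<sigma> l) x) (K (\<sigma> m) y)) = (\<lambda>l. inner (K (\<sigma> m) (K (\<sigma> l) x)) y)"
    proof
      fix l
      have "inner (K (\<sigma> m) (K (\<sigma> l) x)) y = inner (K (\<sigma> m) (K (\<sigma> l) x)) (K (\<sigma> m) (K (\<sigma> m) y))" by (simp add: KK)
      also have "\<dots> = inner (K (\<sigma> l) x) (K (\<sigma> m) y)" using Kinner sS by simp
      finally show "inner (K (\<sigma> l) x) (K (\<sigma> m) y) = inner (K (\<sigma> m) (K (\<sigma> l) x)) y" by simp
    qed
    ultimately have "(\<lambda>l. inner (K (\<sigma> m) (K (\<sigma> l) x)) y) \<longlonglongrightarrow> inner (P x) (K (\<sigma> m) y)" by simp
    then have "inner (P x) (K (\<sigma> m) y) = inner (P x) y" by (rule LIMSEQ_unique[OF _ key])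
    with a show "inner (K (\<sigma> m) (P x)) y = inner (P x) y" by simp
  qed
  show ?thesis
  proof
    fix x
    have "\<And>y. inner (P (P x)) y = inner (P x) y"
    proof -
      fix y
      have "(\<lambda>m. inner (K (\<sigma> m) (P x)) y) \<longlonglongrightarrow> inner (P (P x)) y" by (rule Lr)
      then have "(\<lambda>m. inner (P x) y) \<longlonglongrightarrow> inner (P (P x)) y" by (simp add: step)
      then show "inner (P (P x)) y = inner (P x) y" by (simp add: LIMSEQ_const_iff)
    qed
    then have "inner (P (P x) - P x) (P (P x) - P x) = 0" by (simp add: inner_diff_left)
    then show "(P \<circ> P) x = P x" by simp
  qed
qed

theorem lemma2:
  fixes J :: "'h::{real_inner, complete_space} \<Rightarrow> 'h"
    and K :: "(nat \<Rightarrow> nat) \<Rightarrow> 'h \<Rightarrow> 'h"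
    and P :: "'h \<Rightarrow> 'h"
    and n :: nat
  assumes "complex_structure J"
    and "unitary_rep J K"
    and "continuous_rep K"
    and "\<forall>x y. (\<lambda>m. cinner J (K (nsigma n m) x) y) \<longlonglongrightarrow> cinner J (P x) y"
  shows "P \<circ> P = P"
  using main[OF assms] .

end
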